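(* Let $J\subseteq\mathbb{R}$ be an interval, $f:J\to\mathbb{R}$ convex, $a,b\in J$, and $\nu\in[0,1]$. Then $$2\widetilde r(\nu)\big(f(a)\nabla f(b)-f(a\nabla b)\big)\le f(a)\nabla_\nu f(b)-\mathfrak C_{f,\nu}(a,b)\le 2\widetilde R(\nu)\big(f(a)\nabla f(b)-f(a\nabla b)\big).$$
   Context: For real $x,y$ and $\mu\in[0,1]$, $x\nabla_\mu y:=(1-\mu)x+\mu y$ and $x\nabla y:=\frac{x+y}{2}$. For $f$ convex on an interval containing $a,b$, $$\mathfrak C_{f,\nu}(a,b):=(1-\nu)\int_0^1 f\big(a\nabla_{\nu\lambda}b\big)\,d\lambda+\nu\int_0^1 f\big(b\nabla_{(1-\nu)\lambda}a\big)\,d\lambda .$$ For $\lambda\in[0,1]$ let $r_1(\lambda)=\min\{\nu\lambda,1-\nu\lambda\}$, $r_2(\lambda)=\min\{(1-\nu)\lambda,1-(1-\nu)\lambda\}$, $R_1(\lambda)=\max\{\nu\lambda,1-\nu\lambda\}$, $R_2(\lambda)=\max\{(1-\nu)\lambda,1-(1-\nu)\lambda\}$, and $$\widetilde r(\nu):=\int_0^1\big((1-\nu)r_1(\lambda)+\nu r_2(\lambda)\big)d\lambda,\qquad \widetilde R(\nu):=\int_0^1\big((1-\nu)R_1(\lambda)+\nu R_2(\lambda)\big)d\lambda .$$ *)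

theory Defs
  imports "HOL-Analysis.Analysis"
begin

definition wmean :: "real \<Rightarrow> real \<Rightarrow> real \<Rightarrow> real" where
  "wmean \<mu> x y = (1 - \<mu>) * x + \<mu> * y"

definition amean :: "real \<Rightarrow> real \<Rightarrow> real" where
  "amean x y = (x + y) / 2"

definition Cfrak :: "(real \<Rightarrow> real) \<Rightarrow> real \<Rightarrow> real \<Rightarrow> real \<Rightarrow> real" where
  "Cfrak f \<nu> a b =
     (1 - \<nu>) * integral {0..1} (\<lambda>t. f (wmean (\<nu> * t) a b))
     + \<nu> * integral {0..1} (\<lambda>t. f (wmean ((1 - \<nu>) * t) b a))"

definition r_tilde :: "real \<Rightarrow> real" where
  "r_tilde \<nu> = integral {0..1} (\<lambda>t.
      (1 - \<nu>) * min (\<nu> * t) (1 - \<nu> * t)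
      + \<nu> * min ((1 - \<nu>) * t) (1 - (1 - \<nu>) * t))"

definition R_tilde :: "real \<Rightarrow> real" where
  "R_tilde \<nu> = integral {0..1} (\<lambda>t.
      (1 - \<nu>) * max (\<nu> * t) (1 - \<nu> * t)
      + \<nu> * max ((1 - \<nu>) * t) (1 - (1 - \<nu>) * t))"

end

theory Submission
  imports Defs
begin

lemma convex_integrable01:
  fixes h :: "real \<Rightarrow> real"
  assumes cv: "convex_on {0..1} h"
  shows "h integrable_on {0..1}"
proof -
  define M where "M = max (h 0) (h 1)"
  have up: "h t \<le> M" if "t \<in> {0..1}" for t
  proof -
    have "h ((1 - t) *\<^sub>R 0 + t *\<^sub>R 1) \<le> (1 - t) * h 0 + t * h 1"
      using convex_onD[OF cv, of t 0 1] that by auto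
    also have "\<dots> \<le> (1-t) * M + t * M"
      using that by (intro add_mono mult_left_mono) (auto simp: M_def)
    finally show ?thesis by (simp add: algebra_simps)
  qed
  have lo: "2 * h (1/2) - M \<le> h t" if "t \<in> {0..1}" for t
  proof -
    have e: "(1 - 1/2) *\<^sub>R t + (1/2) *\<^sub>R (1-t) = (1/2::real)" by (simp add: field_simps)
    have "h (1/2) \<le> (1 - 1/2) * h t + (1/2) * h (1-t)"
      by (subst e[symmetric], rule convex_onD[OF cv]) (use that in auto)
    moreover have "h (1-t) \<le> M" using up that by auto
    ultimately show ?thesis by simp
  qed
  have sub: "{0<..<1::real} \<subseteq> {0..1}" by auto
  have cv2: "convex_on {0<..<1::real} h" using convex_on_subset[OF cv sub] convex_real_interval(5) by blast
  have co: "continuous_on {0<..<1} h"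
    by (rule convex_on_continuous[OF _ cv2]) auto
  have "h absolutely_integrable_on {0<..<1}"
  proof (rule measurable_bounded_by_integrable_imp_absolutely_integrable)
    show "h \<in> borel_measurable (lebesgue_on {0<..<1})"
      by (rule continuous_imp_measurable_on_sets_lebesgue[OF co]) auto
    show "(\<lambda>_. \<bar>M\<bar> + \<bar>2 * h (1/2) - M\<bar>) integrable_on {0<..<1::real}"
      using integrable_on_const[of "{0<..<1::real}"] by auto
    show "norm (h x) \<le> \<bar>M\<bar> + \<bar>2 * h (1/2) - M\<bar>" if "x \<in> {0<..<1}" for x
      using up[of x] lo[of x] that by auto
  qed auto
  then have "h integrable_on {0<..<1}" using set_lebesgue_integral_eq_integral(1) by blast
  then show ?thesis
    by (rule integrable_spike_set) (auto intro: negligible_subset[of "{0,1}"])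
qed

lemma pw_half:
  fixes f :: "real \<Rightarrow> real"
  assumes cv: "convex_on J f" and cJ: "convex J" and a: "a \<in> J" and b: "b \<in> J"
    and m0: "0 \<le> \<mu>" and m1: "\<mu> \<le> 1/2"
  shows "2 * \<mu> * (amean (f a) (f b) - f (amean a b)) \<le> wmean \<mu> (f a) (f b) - f (wmean \<mu> a b)
    \<and> wmean \<mu> (f a) (f b) - f (wmean \<mu> a b) \<le> 2 * (1 - \<mu>) * (amean (f a) (f b) - f (amean a b))"
proof
  have mJ: "amean a b \<in> J"
    using convexD[OF cJ a b, of "1/2" "1/2"] by (simp add: amean_def field_simps)
  have xJ: "wmean \<mu> a b \<in> J"
    using convexD[OF cJ a b, of "1-\<mu>" \<mu>] m0 m1 by (simp add: wmean_def)
  have e1: "wmean \<mu> a b = (1 - 2*\<mu>) *\<^sub>R a + (2*\<mu>) *\<^sub>R amean a b"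
    by (simp add: wmean_def amean_def algebra_simps)
  have "f (wmean \<mu> a b) \<le> (1 - 2*\<mu>) * f a + (2*\<mu>) * f (amean a b)"
    unfolding e1 by (rule convex_onD[OF cv]) (use m0 m1 a mJ in auto)
  then show "2 * \<mu> * (amean (f a) (f b) - f (amean a b)) \<le> wmean \<mu> (f a) (f b) - f (wmean \<mu> a b)"
    unfolding amean_def[of "f a"] wmean_def[of _ "f a"] by (simp add: field_simps)
  define s where "s = 1 / (2*(1-\<mu>))"
  have s0: "0 \<le> s" "s \<le> 1" using m0 m1 by (auto simp: s_def field_simps)
  have sm: "s*(1-\<mu>) = 1/2" unfolding s_def using m1 by (simp add: field_simps)
  have e2: "amean a b = (1 - s) *\<^sub>R b + s *\<^sub>R wmean \<mu> a b"
  proof -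
    have nz: "2*(1-\<mu>) \<noteq> 0" using m1 by auto
    have "(1 - s) *\<^sub>R b + s *\<^sub>R wmean \<mu> a b = b - (s*(1-\<mu>))*b + (s*(1-\<mu>))*a"
      unfolding wmean_def by (simp add: algebra_simps)
    then show ?thesis unfolding sm amean_def by simp

  qed
  have "f (amean a b) \<le> (1 - s) * f b + s * f (wmean \<mu> a b)"
    unfolding e2 by (rule convex_onD[OF cv]) (use s0 b xJ in auto)
  then have "2*(1-\<mu>) * f (amean a b) \<le> 2*(1-\<mu>) * ((1 - s) * f b + s * f (wmean \<mu> a b))"
    using m1 by (intro mult_left_mono) auto
  also have "\<dots> = 2*(1-\<mu>) * f b - 2*(s*(1-\<mu>)) * f b + 2*(s*(1-\<mu>)) * f (wmean \<mu> a b)"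
    by (simp add: algebra_simps)
  also have "\<dots> = (1 - 2*\<mu>) * f b + f (wmean \<mu> a b)"
    unfolding sm by (simp add: algebra_simps)
  finally show "wmean \<mu> (f a) (f b) - f (wmean \<mu> a b) \<le> 2 * (1 - \<mu>) * (amean (f a) (f b) - f (amean a b))"
    unfolding amean_def[of "f a"] wmean_def[of _ "f a"] by (simp add: field_simps)
qed

lemma pw:
  fixes f :: "real \<Rightarrow> real"
  assumes cv: "convex_on J f" and cJ: "convex J" and a: "a \<in> J" and b: "b \<in> J"
    and m0: "0 \<le> \<mu>" and m1: "\<mu> \<le> 1"
  shows "2 * min \<mu> (1-\<mu>) * (amean (f a) (f b) - f (amean a b)) \<le> wmean \<mu> (f a) (f b) - f (wmean \<mu> a b)
    \<and> wmean \<mu> (f a) (f b) - f (wmean \<mu> a b) \<le> 2 * max \<mu> (1-\<mu>) * (amean (f a) (f b) - f (amean a b))"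
proof (cases "\<mu> \<le> 1/2")
  case True
  then show ?thesis using pw_half[OF cv cJ a b m0 True] by (simp add: min_def max_def)
next
  case False
  have "0 \<le> 1 - \<mu>" "1 - \<mu> \<le> 1/2" using False m1 by auto
  from pw_half[OF cv cJ b a this]
  have "wmean (1-\<mu>) (f b) (f a) = wmean \<mu> (f a) (f b)" "wmean (1-\<mu>) b a = wmean \<mu> a b"
    "amean (f b) (f a) = amean (f a) (f b)" "amean b a = amean a b"
    by (auto simp: wmean_def amean_def algebra_simps)
  with pw_half[OF cv cJ b a \<open>0 \<le> 1 - \<mu>\<close> \<open>1 - \<mu> \<le> 1/2\<close>] False show ?thesis
    by (simp add: min_def max_def)
qed

lemma lin_int: "((\<lambda>t. c0 + c1 * t) has_integral (c0 + c1/2)) {0..1::real}"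
proof -
  have "((\<lambda>t. c0 + c1 * t) has_integral ((\<lambda>t. c0*t + c1*t^2/2) 1 - (\<lambda>t. c0*t + c1*t^2/2) 0)) {0..1::real}"
    by (rule fundamental_theorem_of_calculus)
       (auto intro!: derivative_eq_intros simp: has_real_derivative_iff_has_vector_derivative[symmetric])
  then show ?thesis by simp
qed

lemma comp_convex:
  fixes f :: "real \<Rightarrow> real"
  assumes cv: "convex_on J f" and cJ: "convex J" and a: "a \<in> J" and b: "b \<in> J"
    and c0: "0 \<le> c" and c1: "c \<le> 1"
  shows "convex_on {0..1} (\<lambda>t. f (wmean (c*t) a b))"
proof (rule convex_onI)
  have inJ: "wmean (c*x) a b \<in> J" if "x \<in> {0..1}" for x
  proof -
    have "0 \<le> c*x" "c*x \<le> 1" using that c0 c1 by (auto intro: mult_le_one)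
    then show ?thesis using convexD[OF cJ a b, of "1-c*x" "c*x"] by (simp add: wmean_def)
  qed
  fix t x y :: real assume t: "0 < t" "t < 1" and x: "x \<in> {0..1}" and y: "y \<in> {0..1}"
  have "wmean (c * ((1 - t) *\<^sub>R x + t *\<^sub>R y)) a b = (1-t) *\<^sub>R wmean (c*x) a b + t *\<^sub>R wmean (c*y) a b"
    by (simp add: wmean_def algebra_simps)
  then show "f (wmean (c * ((1 - t) *\<^sub>R x + t *\<^sub>R y)) a b) \<le> (1-t) * f (wmean (c*x) a b) + t * f (wmean (c*y) a b)"
    using convex_onD[OF cv, of t "wmean (c*x) a b" "wmean (c*y) a b"] t inJ x y by auto
qed auto

theorem theorem2p17:
  fixes J :: "real set" and f :: "real \<Rightarrow> real" and a b \<nu> :: real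
  assumes "is_interval J"
    and "convex_on J f"
    and "a \<in> J" and "b \<in> J"
    and "0 \<le> \<nu>" and "\<nu> \<le> 1"
  shows "2 * r_tilde \<nu> * (amean (f a) (f b) - f (amean a b))
           \<le> wmean \<nu> (f a) (f b) - Cfrak f \<nu> a b
       \<and> wmean \<nu> (f a) (f b) - Cfrak f \<nu> a b
           \<le> 2 * R_tilde \<nu> * (amean (f a) (f b) - f (amean a b))"
proof -
  note cv = assms(2) and a = assms(3) and b = assms(4) and n0 = assms(5) and n1 = assms(6)
  have cJ: "convex J" using assms(1) is_interval_convex by blast
  define K where "K = amean (f a) (f b) - f (amean a b)"
  have Ksym: "amean (f b) (f a) - f (amean b a) = K"
    unfolding K_def amean_def by (simp add: add.commute)
  define h1 where "h1 = (\<lambda>t. f (wmean (\<nu>*t) a b))"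
  define h2 where "h2 = (\<lambda>t. f (wmean ((1-\<nu>)*t) b a))"
  have i1: "h1 integrable_on {0..1}" unfolding h1_def
    by (rule convex_integrable01, rule comp_convex[OF cv cJ a b n0 n1])
  have i2: "h2 integrable_on {0..1}" unfolding h2_def
    by (rule convex_integrable01, rule comp_convex[OF cv cJ b a]) (use n0 n1 in auto)
  define I1 where "I1 = integral {0..1} h1"
  define I2 where "I2 = integral {0..1} h2"
  have hi1: "(h1 has_integral I1) {0..1}" using i1 I1_def by auto
  have hi2: "(h2 has_integral I2) {0..1}" using i2 I2_def by auto
  define L1 where "L1 = (\<lambda>t. wmean (\<nu>*t) (f a) (f b))"
  define L2 where "L2 = (\<lambda>t. wmean ((1-\<nu>)*t) (f b) (f a))"
  have l1: "(L1 has_integral (f a + (\<nu>*(f b - f a))/2)) {0..1}"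
  proof -
    have "L1 = (\<lambda>t. f a + (\<nu>*(f b - f a)) * t)" unfolding L1_def wmean_def
      by (auto simp: algebra_simps)
    then show ?thesis using lin_int by simp
  qed
  have l2: "(L2 has_integral (f b + ((1-\<nu>)*(f a - f b))/2)) {0..1}"
  proof -
    have "L2 = (\<lambda>t. f b + ((1-\<nu>)*(f a - f b)) * t)" unfolding L2_def wmean_def
      by (auto simp: algebra_simps)
    then show ?thesis using lin_int by simp
  qed
  define D where "D = (\<lambda>t. (1-\<nu>) * (L1 t - h1 t) + \<nu> * (L2 t - h2 t))"
  have hD: "(D has_integral ((1-\<nu>) * ((f a + (\<nu>*(f b - f a))/2) - I1) + \<nu> * ((f b + ((1-\<nu>)*(f a - f b))/2) - I2))) {0..1}"
    unfolding D_def
    by (intro has_integral_add has_integral_mult_right has_integral_diff l1 l2 hi1 hi2)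
  have valD: "(1-\<nu>) * ((f a + (\<nu>*(f b - f a))/2) - I1) + \<nu> * ((f b + ((1-\<nu>)*(f a - f b))/2) - I2)
      = wmean \<nu> (f a) (f b) - Cfrak f \<nu> a b"
    unfolding Cfrak_def wmean_def[of \<nu>] I1_def I2_def h1_def h2_def by (simp add: field_simps)
  have intD: "integral {0..1} D = wmean \<nu> (f a) (f b) - Cfrak f \<nu> a b"
    using integral_unique[OF hD] valD by simp
  have iD: "D integrable_on {0..1}" using hD by blast
  define rr where "rr = (\<lambda>t::real. (1 - \<nu>) * min (\<nu> * t) (1 - \<nu> * t)
      + \<nu> * min ((1 - \<nu>) * t) (1 - (1 - \<nu>) * t))"
  define RR where "RR = (\<lambda>t::real. (1 - \<nu>) * max (\<nu> * t) (1 - \<nu> * t)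
      + \<nu> * max ((1 - \<nu>) * t) (1 - (1 - \<nu>) * t))"
  have crr: "continuous_on {0..1} rr" unfolding rr_def by (intro continuous_intros)
  have cRR: "continuous_on {0..1} RR" unfolding RR_def by (intro continuous_intros)
  have irr: "(\<lambda>t. 2 * K * rr t) integrable_on {0..1}"
    by (intro integrable_continuous_interval continuous_intros crr)
  have iRR: "(\<lambda>t. 2 * K * RR t) integrable_on {0..1}"
    by (intro integrable_continuous_interval continuous_intros cRR)
  have ptw: "2 * K * rr t \<le> D t \<and> D t \<le> 2 * K * RR t" if t: "t \<in> {0..1}" for t
  proof -
    have m1: "0 \<le> \<nu>*t" "\<nu>*t \<le> 1" using t n0 n1 by (auto intro: mult_le_one)
    have m2: "0 \<le> (1-\<nu>)*t" "(1-\<nu>)*t \<le> 1" using t n0 n1 by (auto intro: mult_le_one)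
    have p1: "2 * min (\<nu>*t) (1-\<nu>*t) * K \<le> L1 t - h1 t \<and> L1 t - h1 t \<le> 2 * max (\<nu>*t) (1-\<nu>*t) * K"
      using pw[OF cv cJ a b m1] unfolding K_def L1_def h1_def by simp
    have p2: "2 * min ((1-\<nu>)*t) (1-(1-\<nu>)*t) * K \<le> L2 t - h2 t \<and> L2 t - h2 t \<le> 2 * max ((1-\<nu>)*t) (1-(1-\<nu>)*t) * K"
      using pw[OF cv cJ b a m2] Ksym unfolding L2_def h2_def by simp
    have nn: "0 \<le> 1 - \<nu>" using n1 by simp
    have q1: "(1-\<nu>) * (2 * min (\<nu>*t) (1-\<nu>*t) * K) \<le> (1-\<nu>) * (L1 t - h1 t)"
      "(1-\<nu>) * (L1 t - h1 t) \<le> (1-\<nu>) * (2 * max (\<nu>*t) (1-\<nu>*t) * K)"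
      using p1 nn by (auto intro: mult_left_mono)
    have q2: "\<nu> * (2 * min ((1-\<nu>)*t) (1-(1-\<nu>)*t) * K) \<le> \<nu> * (L2 t - h2 t)"
      "\<nu> * (L2 t - h2 t) \<le> \<nu> * (2 * max ((1-\<nu>)*t) (1-(1-\<nu>)*t) * K)"
      using p2 n0 by (auto intro: mult_left_mono)
    have e1: "2 * K * rr t = (1-\<nu>) * (2 * min (\<nu>*t) (1-\<nu>*t) * K) + \<nu> * (2 * min ((1-\<nu>)*t) (1-(1-\<nu>)*t) * K)"
      unfolding rr_def by (simp add: algebra_simps)
    have e2: "2 * K * RR t = (1-\<nu>) * (2 * max (\<nu>*t) (1-\<nu>*t) * K) + \<nu> * (2 * max ((1-\<nu>)*t) (1-(1-\<nu>)*t) * K)"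
      unfolding RR_def by (simp add: algebra_simps)
    show ?thesis unfolding D_def e1 e2 using q1 q2 by linarith
  qed
  have lo: "integral {0..1} (\<lambda>t. 2 * K * rr t) \<le> integral {0..1} D"
    by (rule integral_le[OF irr iD]) (use ptw in blast)
  have up: "integral {0..1} D \<le> integral {0..1} (\<lambda>t. 2 * K * RR t)"
    by (rule integral_le[OF iD iRR]) (use ptw in blast)
  have E1: "integral {0..1} (\<lambda>t. 2 * K * rr t) = 2 * K * r_tilde \<nu>"
    unfolding r_tilde_def rr_def by (rule integral_mult_right)
  have E2: "integral {0..1} (\<lambda>t. 2 * K * RR t) = 2 * K * R_tilde \<nu>"
    unfolding R_tilde_def RR_def by (rule integral_mult_right)
  have "2 * r_tilde \<nu> * K \<le> wmean \<nu> (f a) (f b) - Cfrak f \<nu> a b"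
  proof -
    have "2 * K * r_tilde \<nu> \<le> wmean \<nu> (f a) (f b) - Cfrak f \<nu> a b" using lo unfolding E1 intD .
    then show ?thesis by (simp add: mult_ac)
  qed
  moreover have "wmean \<nu> (f a) (f b) - Cfrak f \<nu> a b \<le> 2 * R_tilde \<nu> * K"
  proof -
    have "wmean \<nu> (f a) (f b) - Cfrak f \<nu> a b \<le> 2 * K * R_tilde \<nu>" using up unfolding E2 intD .
    then show ?thesis by (simp add: mult_ac)
  qed
  ultimately show ?thesis unfolding K_def by blast
qed

end
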